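(* Consider the algorithm AOD described in the context, with known horizon $T$, under assumptions (A1)–(A3). Let $\mathbf{u}_1,\ldots,\mathbf{u}_{T+1}\in\Omega$ and $P_T=\sum_{t=1}^T\|\mathbf{u}_{t+1}-\mathbf{u}_t\|_2$, and suppose $P_T\le D$. Then \[ \sum_{t=1}^T f_t(\mathbf{w}_t)-\sum_{t=1}^T f_t(\mathbf{u}_t)\le\Big(\frac{1+\sqrt2}{2}DG+G\sqrt{DP_T}+\sqrt{6c(T)}\Big)\sqrt{T}, \] where $c(T)=1+\ln T+\ln(1+\log_2 T)+\ln\frac{5+3\ln(1+T)}{2}$.
   Context: Online convex optimization: $\Omega\subseteq\mathbb{R}^d$ convex; in round $t=1,\ldots,T$ the learner plays $\mathbf{w}_t\in\Omega$, then a convex $f_t:\Omega\to\mathbb{R}$ is revealed. Assumptions: (A1) $\|\nabla f_t(\mathbf{w})\|_2\le G$ for all $\mathbf{w}\in\Omega$, $t\in[T]$; (A2) $\mathbf{0}\in\Omega$ and $\max_{\mathbf{w},\mathbf{w}'\in\Omega}\|\mathbf{w}-\mathbf{w}'\|_2\le D$; (A3) $0\le f_t\le1$ on $\Omega$. $\Pi_\Omega$ is Euclidean projection. Dense geometric covering intervals: $\mathcal{D}=\bigcup_{k\ge0,\,2^k\le T}\mathcal{D}_k$, $\mathcal{D}_k=\{[(i-1)2^k+1,\,i2^k]: i=1,2,\ldots\}$. Algorithm AOD: for each $I\in\mathcal{D}$ an expert $E_I$ runs online gradient descent $\mathbf{w}_{t+1,I}=\Pi_\Omega[\mathbf{w}_{t,I}-\eta_I\nabla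 f_t(\mathbf{w}_{t,I})]$, $\eta_I=D/(G\sqrt{|I|})$, over rounds $t\in I$; its initial point is arbitrary if $\min I=1$, and otherwise is the next iterate of the expert of the preceding same-length interval $[\min I-|I|,\min I-1]$ after processing $f_{\min I-1}$. Active experts at round $t$: $\mathcal{A}_t=\{E_I:I\in\mathcal{D},t\in I\}$. Meta-algorithm (AdaNormalHedge): $\Phi(R,C)=\exp([R]_+^2/(3C))$, $[x]_+=\max(0,x)$, $\Phi(0,0)=1$, $w(R,C)=\tfrac12(\Phi(R+1,C+1)-\Phi(R-1,C+1))$, $R_{t-1,I}=\sum_{u=\min I}^{t-1}(f_u(\mathbf{w}_u)-f_u(\mathbf{w}_{u,I}))$, $C_{t-1,I}=\sum_{u=\min I}^{t-1}|f_u(\mathbf{w}_u)-f_u(\mathbf{w}_{u,I})|$, $p_{t,I}=w(R_{t-1,I},C_{t-1,I})/\sum_{E_{I'}\in\mathcal{A}_t}w(R_{t-1,I'},C_{t-1,I'})$, played point $\mathbf{w}_t=\sum_{E_I\in\mathcal{A}_t}p_{t,I}\mathbf{w}_{t,I}$. *)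

theory Defs
  imports "HOL-Analysis.Analysis"
begin

text \<open>AdaNormalHedge potential and weight.  With C = 0 the division yields 0,
so Phi R 0 = 1, matching the convention Phi(0,0)=1.\<close>
definition Phi :: "real \<Rightarrow> real \<Rightarrow> real" where
  "Phi R C = exp ((max 0 R)^2 / (3 * C))"

definition anh_weight :: "real \<Rightarrow> real \<Rightarrow> real" where
  "anh_weight R C = (Phi (R + 1) (C + 1) - Phi (R - 1) (C + 1)) / 2"

text \<open>Levels k with 2^k \<le> T; the unique interval of D_k containing round t
(t \<ge> 1) is [seg_start k t, seg_start k t + 2^k - 1].\<close>
definition levels :: "nat \<Rightarrow> nat set" where
  "levels T = {k. 2 ^ k \<le> T}"

definition seg_start :: "nat \<Rightarrow> nat \<Rightarrow> nat" where
  "seg_start k t = (t - 1) div 2 ^ k * 2 ^ k + 1"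

text \<open>Cumulative instantaneous regret R_{t-1,I} and its absolute version
C_{t-1,I} of the active expert of level k at round t (x k u is that expert's
iterate at round u, w u the played point).\<close>
definition cumR :: "(nat \<Rightarrow> 'a \<Rightarrow> real) \<Rightarrow> (nat \<Rightarrow> 'a) \<Rightarrow> (nat \<Rightarrow> nat \<Rightarrow> 'a) \<Rightarrow> nat \<Rightarrow> nat \<Rightarrow> real" where
  "cumR f w x k t = (\<Sum>u\<in>{seg_start k t..<t}. f u (w u) - f u (x k u))"

definition cumC :: "(nat \<Rightarrow> 'a \<Rightarrow> real) \<Rightarrow> (nat \<Rightarrow> 'a) \<Rightarrow> (nat \<Rightarrow> nat \<Rightarrow> 'a) \<Rightarrow> nat \<Rightarrow> nat \<Rightarrow> real" where
  "cumC f w x k t = (\<Sum>u\<in>{seg_start k t..<t}. \<bar>f u (w u) - f u (x k u)\<bar>)"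

definition meta_prob :: "nat \<Rightarrow> (nat \<Rightarrow> 'a \<Rightarrow> real) \<Rightarrow> (nat \<Rightarrow> 'a) \<Rightarrow> (nat \<Rightarrow> nat \<Rightarrow> 'a) \<Rightarrow> nat \<Rightarrow> nat \<Rightarrow> real" where
  "meta_prob T f w x k t =
     anh_weight (cumR f w x k t) (cumC f w x k t) /
     (\<Sum>k'\<in>levels T. anh_weight (cumR f w x k' t) (cumC f w x k' t))"

definition cT :: "nat \<Rightarrow> real" where
  "cT T = 1 + ln (real T) + ln (1 + log 2 (real T)) + ln ((5 + 3 * ln (1 + real T)) / 2)"

end

theory Submission
  imports Defs
begin

lemma frac_cmp: "0 < (p::real) \<Longrightarrow> 0 < q \<Longrightarrow> x*q \<le> y*p \<Longrightarrow> x/p \<le> y/q"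
  by (simp add: divide_simps)

lemma qol:
  fixes a b x C s :: real
  assumes "0 \<le> x" "x \<le> (1-s)*a + s*b" "0 \<le> a" "0 \<le> b" "0 \<le> C" "C = 0 \<Longrightarrow> a = 0"
    "0 \<le> s" "s \<le> 1"
  shows "x^2/(3*(C+s)) \<le> (1-s)*(a^2/(3*C)) + s*(b^2/(3*(C+1)))"
proof -
  have x2: "x^2 \<le> ((1-s)*a + s*b)^2" using assms by (intro power_mono) auto
  show ?thesis
  proof (cases "s = 0")
    case True
    then show ?thesis using assms x2 by (auto intro!: divide_right_mono)
  next
    case s: False
    show ?thesis
    proof (cases "C = 0")
      case True
      then have "a = 0" using assms by auto
      then show ?thesis using True s assms x2
        by (simp add: power_mult_distrib power2_eq_square divide_simps mult_ac)
    next
      case False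
      then have Cp: "C > 0" using assms by auto
      have key: "((1-s)*a + s*b)^2 * (C*(C+1)) \<le> (C+s)*((1-s)*a^2*(C+1) + s*b^2*C)"
      proof -
        have "(C+s)*((1-s)*a^2*(C+1) + s*b^2*C) - ((1-s)*a + s*b)^2 * (C*(C+1))
              = (1-s) * s * (a*(C+1) - b*C)^2"
          by (simp add: algebra_simps power2_eq_square)
        also have "\<dots> \<ge> 0" using assms by auto
        finally show ?thesis by linarith
      qed
      have "x^2/(3*(C+s)) \<le> ((1-s)*a + s*b)^2/(3*(C+s))"
        using x2 Cp assms by (intro divide_right_mono) auto
      also have "\<dots> \<le> (1-s)*(a^2/(3*C)) + s*(b^2/(3*(C+1)))"
      proof -
        have rhs: "(1-s)*(a^2/(3*C)) + s*(b^2/(3*(C+1))) = ((1-s)*a^2*(C+1) + s*b^2*C)/(3*C*(C+1))"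
        proof -
          have "C \<noteq> 0" "C + 1 \<noteq> 0" "C * (C + 1) \<noteq> 0" using Cp by auto
          then show ?thesis by (simp add: divide_simps) (simp add: algebra_simps)
        qed
        have "((1-s)*a + s*b)^2/(3*(C+s)) \<le> ((1-s)*a^2*(C+1) + s*b^2*C)/(3*C*(C+1))"
        proof (rule frac_cmp)
          show "0 < 3*(C+s)" using Cp assms by auto
          show "0 < 3*C*(C+1)" using Cp by auto
          show "((1-s)*a + s*b)^2 * (3*C*(C+1)) \<le> ((1-s)*a^2*(C+1) + s*b^2*C) * (3*(C+s))"
            using mult_left_mono[OF key, of 3] by (simp add: algebra_simps)
        qed
        then show ?thesis using rhs by simp
      qed
      finally show ?thesis .
    qed
  qed
qed

lemma cosh_bd:
  fixes y :: real
  assumes "0 \<le> y" "y \<le> 2/3"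
  shows "exp y + exp (-y) \<le> 2 * exp (11/20 * y^2)"
proof -
  obtain t1 where t1: "\<bar>t1\<bar> \<le> \<bar>y\<bar>" "exp y = (\<Sum>m<4. y^m / fact m) + exp t1 / fact 4 * y^4"
    using Maclaurin_exp_le[of y 4] by blast
  obtain t2 where t2: "\<bar>t2\<bar> \<le> \<bar>-y\<bar>" "exp (-y) = (\<Sum>m<4. (-y)^m / fact m) + exp t2 / fact 4 * (-y)^4"
    using Maclaurin_exp_le[of "-y" 4] by blast
  have e23: "exp (2/3::real) \<le> 19/9"
    using exp_bound[of "2/3::real"] by (simp add: power2_eq_square)
  have "exp t1 \<le> 19/9"
  proof -
    have "t1 \<le> 2/3" using t1(1) assms by (auto simp: abs_le_iff)
    then have "exp t1 \<le> exp (2/3)" by simp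
    then show ?thesis using e23 by linarith
  qed
  moreover have "exp t2 \<le> 19/9"
  proof -
    have "t2 \<le> 2/3" using t2(1) assms by (auto simp: abs_le_iff)
    then have "exp t2 \<le> exp (2/3)" by simp
    then show ?thesis using e23 by linarith
  qed
  ultimately have r: "(exp t1 + exp t2) * y^4 \<le> 38/9 * y^4"
    by (intro mult_right_mono) auto
  have s1: "(\<Sum>m<4. y^m / fact m) = 1 + y + y^2/2 + y^3/6"
    by (simp add: lessThan_nat_numeral fact_numeral eval_nat_numeral)
  have s2: "(\<Sum>m<4. (-y)^m / fact m) = 1 - y + y^2/2 - y^3/6"
    by (simp add: lessThan_nat_numeral fact_numeral eval_nat_numeral)
  have f4: "(fact 4 :: real) = 24" by (simp add: fact_numeral)
  have "exp y + exp (-y) = 2 + y^2 + (exp t1 + exp t2) * y^4 / 24"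
    using t1(2) t2(2) s1 s2 f4 by (simp add: field_simps)
  also have "\<dots> \<le> 2 + y^2 + 2*(19/9)/24 * y^4" using r by simp
  finally have "exp y + exp (-y) \<le> 2 + y^2 + 2*(19/9)/24 * y^4" .
  also have "\<dots> \<le> 2 + 11/10 * y^2"
  proof -
    have "y^4 \<le> 4/9 * y^2"
    proof -
      have "y^2 \<le> 4/9" using assms power_mono[of y "2/3" 2] by (simp add: power2_eq_square)
      then have "y^2 * y^2 \<le> 4/9 * y^2" by (intro mult_right_mono) auto
      then show ?thesis by (simp add: power2_eq_square eval_nat_numeral)
    qed
    then have "19/108 * y^4 \<le> 19/108 * (4/9 * y^2)" by simp
    then show ?thesis using zero_le_power2[of y] by linarith
  qed
  also have "\<dots> \<le> 2 * exp (11/20 * y^2)"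
  proof -
    have "1 + 11/20*y^2 \<le> exp (11/20*y^2)" by (rule exp_ge_add_one_self)
    then show ?thesis by linarith
  qed
  finally show ?thesis .
qed

lemma endpoint:
  fixes R C :: real
  assumes C0: "0 \<le> C" and RC: "\<bar>R\<bar> \<le> C"
  shows "Phi (R+1) (C+1) + Phi (R-1) (C+1) \<le> 2 * Phi R C + 3/(C+1)"
proof (cases "R \<le> 0")
  case True
  have p1: "Phi R C = 1" using True by (simp add: Phi_def)
  have p2: "Phi (R-1) (C+1) = 1" using True by (simp add: Phi_def)
  define z where "z = 1/(3*(C+1))"
  have z0: "0 \<le> z" "z \<le> 1/3" using C0 by (auto simp: z_def field_simps)
  have m: "(max 0 (R+1))^2 \<le> 1"
    using True RC by (intro power_le_one) auto
  have "Phi (R+1) (C+1) = exp ((max 0 (R+1))^2 * z)" by (simp add: Phi_def z_def)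
  also have "\<dots> \<le> exp z" using m z0 mult_right_mono[OF m, of z] by simp
  also have "\<dots> \<le> 1 + z + z^2" using z0 by (intro exp_bound) auto
  also have "\<dots> \<le> 1 + 3/(C+1)"
  proof -
    have "z*z \<le> 1*z" using z0 by (intro mult_right_mono) auto
    then have "z^2 \<le> z" by (simp add: power2_eq_square)
    moreover have "2*z \<le> 3/(C+1)" using C0 by (simp add: z_def field_simps)
    ultimately show ?thesis by linarith
  qed
  finally show ?thesis using p1 p2 by simp
next
  case False
  then have Rp: "R > 0" by simp
  have Cp: "C > 0" using Rp RC by simp
  define D where "D = C + 1"
  have Dp: "D > 0" "C < D" using Cp by (auto simp: D_def)
  define y where "y = 2*R/(3*D)"
  define A where "A = (R^2+1)/(3*D)"
  define X where "X = R^2/(3*C)"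
  define E where "E = A + 11/20*y^2 - X"
  have X0: "X \<ge> 0" using Cp by (simp add: X_def)
  have y0: "0 \<le> y" "y \<le> 2/3" using Rp RC Dp by (auto simp: y_def field_simps)
  have e1: "Phi (R+1) (C+1) = exp (A + y)"
  proof -
    have "max 0 (R+1) = R+1" using Rp by simp
    moreover have "(R+1)^2/(3*D) = A + y" using Dp by (simp add: A_def y_def field_simps power2_eq_square)
    ultimately show ?thesis by (simp add: Phi_def D_def)
  qed
  have e2: "Phi (R-1) (C+1) \<le> exp (A - y)"
  proof -
    have "(max 0 (R-1))^2 \<le> (R-1)^2"
      by (cases "R \<le> 1") (auto simp: max_def)
    then have "(max 0 (R-1))^2/(3*D) \<le> (R-1)^2/(3*D)" using Dp by (intro divide_right_mono) auto
    moreover have "(R-1)^2/(3*D) = A - y" using Dp by (simp add: A_def y_def field_simps power2_eq_square)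
    ultimately show ?thesis by (simp add: Phi_def D_def)
  qed
  have e3: "Phi R C = exp X" using Rp by (simp add: Phi_def X_def)
  have "Phi (R+1) (C+1) + Phi (R-1) (C+1) \<le> exp A * (exp y + exp (-y))"
    using e1 e2 by (simp add: exp_add exp_diff distrib_left exp_minus field_simps)
  also have "\<dots> \<le> exp A * (2 * exp (11/20*y^2))"
    using cosh_bd[OF y0] by (intro mult_left_mono) auto
  also have "\<dots> = 2 * exp X * exp E" by (simp add: E_def exp_add exp_diff)
  finally have S: "Phi (R+1) (C+1) + Phi (R-1) (C+1) \<le> 2 * exp X * exp E" .
  have EB: "45 * D * E \<le> 15 - 12 * X"
  proof -
    have a1: "45*D*E = 15*(R^2+1) + 11*R^2/D - 15*D*R^2/C"
      using Cp Dp unfolding E_def A_def X_def y_def by (simp add: field_simps power2_eq_square)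
    have a2: "15*D*R^2/C = 15*R^2 + 15*R^2/C" using Cp by (simp add: D_def field_simps)
    have "45 * D * E = 15 - 15*R^2/C + 11*R^2/D" using a1 a2 by (simp add: algebra_simps)
    moreover have "R^2/D \<le> R^2/C" using Cp Dp by (intro divide_left_mono) auto
    ultimately show ?thesis by (simp add: X_def)
  qed
  show ?thesis
  proof (cases "E \<le> 0")
    case True
    then have "exp E \<le> 1" by simp
    then have "2 * exp X * exp E \<le> 2 * exp X" by simp
    moreover have "0 < 3/(C+1)" using Cp by simp
    ultimately show ?thesis using S e3 by linarith
  next
    case False
    have "0 < 45*D*E" using False Dp by simp
    then have X54: "X \<le> 5/4" using EB by linarith
    have E3: "E \<le> 1/3"
    proof -
      have "45 * D * E \<le> 15" using EB X0 by linarith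
      moreover have "45 * 1 * E \<le> 45 * D * E" using False Dp by (intro mult_right_mono) (use Cp in \<open>auto simp: D_def\<close>)
      ultimately show ?thesis by linarith
    qed
    have h1: "exp X * (15 - 12*X) \<le> 20"
    proof -
      have "15 - 12*X \<le> 15 * exp (-(4/5*X))" using exp_ge_add_one_self[of "-(4/5*X)"] by linarith
      then have "exp X * (15 - 12*X) \<le> exp X * (15 * exp (-(4/5*X)))" by (intro mult_left_mono) auto
      also have "\<dots> = 15 * exp (X/5)"
      proof -
        have "X + -(4/5*X) = X/5" by simp
        then have "exp X * exp (-(4/5*X)) = exp (X/5)" using exp_add[of X "-(4/5*X)"] by simp
        then show ?thesis by simp
      qed
      also have "\<dots> \<le> 15 * (1 + X/5 + (X/5)^2)" using X0 X54 by (intro mult_left_mono exp_bound) auto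
      also have "\<dots> \<le> 20"
      proof -
        have "(X/5)^2 \<le> (1/4)^2" using X0 X54 by (intro power_mono) auto
        then show ?thesis using X54 by (simp add: power2_eq_square)
      qed
      finally show ?thesis .
    qed
    have h3: "exp E \<le> 1 + 4/3 * E"
    proof -
      have "exp E \<le> 1 + E + E^2" using False E3 by (intro exp_bound) auto
      moreover have "E^2 \<le> E/3"
      proof -
        have "E*E \<le> (1/3)*E" using False E3 by (intro mult_right_mono) auto
        then show ?thesis by (simp add: power2_eq_square)
      qed
      ultimately show ?thesis by linarith
    qed
    have h2: "E \<le> (15 - 12*X)/(45*D)"
    proof -
      have "E*(45*D) \<le> 15-12*X" using EB by (simp add: mult_ac)
      then show ?thesis using pos_le_divide_eq[of "45*D" E "15-12*X"] Dp by simp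
    qed
    have "2 * exp X * exp E \<le> 2 * exp X * (1 + 4/3 * E)" using h3 by (intro mult_left_mono) auto
    also have "\<dots> = 2 * exp X + 8/3 * (exp X * E)" by (simp add: algebra_simps)
    also have "exp X * E \<le> exp X * ((15 - 12*X)/(45*D))" using h2 by (intro mult_left_mono) auto
    also have "\<dots> = (exp X * (15 - 12*X))/(45*D)" by simp
    also have "\<dots> \<le> 20/(45*D)" using h1 Dp by (intro divide_right_mono) auto
    finally have "2 * exp X * exp E \<le> 2 * exp X + 8/3 * (20/(45*D))" by simp
    moreover have "8/3 * (20/(45*D)) \<le> 3/(C+1)"
    proof -
      have "8/3 * (20/(45*D)) = (32/27) / D" by simp
      also have "\<dots> \<le> 3 / D" using Dp by (intro divide_right_mono) auto
      finally show ?thesis by (simp add: D_def)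
    qed
    ultimately show ?thesis using S e3 by linarith
  qed
qed

lemma exp_interp:
  fixes p q s :: real
  assumes "0 \<le> s" "s \<le> 1"
  shows "exp ((1-s)*p + s*q) \<le> (1-s)*exp p + s*exp q"
  using convex_onD[OF exp_convex, of s p q] assms by simp

lemma Phi_mono_R: "0 \<le> C \<Longrightarrow> R \<le> R' \<Longrightarrow> Phi R C \<le> Phi R' C"
proof -
  assume a: "0 \<le> C" "R \<le> R'"
  have "(max 0 R)^2 \<le> (max 0 R')^2" using a by (intro power_mono) auto
  then have "(max 0 R)^2/(3*C) \<le> (max 0 R')^2/(3*C)" using a by (intro divide_right_mono) auto
  then show ?thesis unfolding Phi_def by simp
qed

lemma Phi_ge1: "0 \<le> C \<Longrightarrow> 1 \<le> Phi R C"
  unfolding Phi_def by simp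

lemma anh_weight_nonneg: "0 \<le> C \<Longrightarrow> 0 \<le> anh_weight R C"
  unfolding anh_weight_def using Phi_mono_R[of "C+1" "R-1" "R+1"] by simp

lemma step_ineq:
  fixes R C r :: real
  assumes C0: "0 \<le> C" and RC: "\<bar>R\<bar> \<le> C" and r1: "\<bar>r\<bar> \<le> 1"
  shows "Phi (R + r) (C + \<bar>r\<bar>) \<le> Phi R C + anh_weight R C * r + 3*\<bar>r\<bar>/(2*(C+1))"
proof -
  define P0 where "P0 = Phi R C"
  define P1 where "P1 = Phi (R+1) (C+1)"
  define Pm where "Pm = Phi (R-1) (C+1)"
  have EP: "P1 + Pm \<le> 2*P0 + 3/(C+1)" using endpoint[OF C0 RC] by (simp add: P0_def P1_def Pm_def)
  have W: "anh_weight R C = (P1 - Pm)/2" by (simp add: anh_weight_def P1_def Pm_def)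
  have aC: "C = 0 \<Longrightarrow> max 0 R = 0" using RC by auto
  show ?thesis
  proof (cases "0 \<le> r")
    case True
    define s where "s = r"
    have s: "0 \<le> s" "s \<le> 1" using True r1 by (auto simp: s_def)
    have q: "(max 0 (R+s))^2/(3*(C+s)) \<le> (1-s)*((max 0 R)^2/(3*C)) + s*((max 0 (R+1))^2/(3*(C+1)))"
    proof (rule qol)
      show "max 0 (R + s) \<le> (1 - s) * max 0 R + s * max 0 (R + 1)"
      proof -
        have "R + s \<le> (1 - s) * max 0 R + s * max 0 (R + 1)"
          using s mult_left_mono[of R "max 0 R" "1-s"] mult_left_mono[of "R+1" "max 0 (R+1)" s]
          by (simp add: algebra_simps)
        moreover have "0 \<le> (1 - s) * max 0 R + s * max 0 (R + 1)" using s by simp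
        ultimately show ?thesis by simp
      qed
    qed (use s C0 aC in auto)
    have "Phi (R + r) (C + \<bar>r\<bar>) = exp ((max 0 (R+s))^2/(3*(C+s)))"
      using True by (simp add: Phi_def s_def)
    also have "\<dots> \<le> exp ((1-s)*((max 0 R)^2/(3*C)) + s*((max 0 (R+1))^2/(3*(C+1))))"
      using q by simp
    also have "\<dots> \<le> (1-s)*P0 + s*P1" unfolding P0_def P1_def Phi_def by (rule exp_interp[OF s])
    also have "\<dots> = P0 + s*(P1 - P0)" by (simp add: algebra_simps)
    also have "\<dots> \<le> P0 + s*((P1 - Pm)/2 + 3/(2*(C+1)))"
    proof (intro add_left_mono mult_left_mono)
      define c where "c = 3/(C+1)"
      have c2: "c/2 = 3/(2*(C+1))" by (simp add: c_def)
      have "P1 - P0 \<le> (P1 - Pm)/2 + c/2" using EP[folded c_def] by (simp add: field_simps)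
      then show "P1 - P0 \<le> (P1 - Pm)/2 + 3/(2*(C+1))" by (simp only: c2)
    qed (use s in auto)
    finally have fin: "Phi (R + r) (C + \<bar>r\<bar>) \<le> P0 + s*((P1 - Pm)/2 + 3/(2*(C+1)))" .
    have "P0 + s*((P1 - Pm)/2 + 3/(2*(C+1))) = Phi R C + anh_weight R C * r + 3*\<bar>r\<bar>/(2*(C+1))"
      using True unfolding W P0_def s_def by (simp add: distrib_left mult_ac)
    then show ?thesis using fin by simp
  next
    case False
    define s where "s = -r"
    have s: "0 \<le> s" "s \<le> 1" using False r1 by (auto simp: s_def)
    have q: "(max 0 (R-s))^2/(3*(C+s)) \<le> (1-s)*((max 0 R)^2/(3*C)) + s*((max 0 (R-1))^2/(3*(C+1)))"
    proof (rule qol)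
      show "max 0 (R - s) \<le> (1 - s) * max 0 R + s * max 0 (R - 1)"
      proof -
        have "R - s \<le> (1 - s) * max 0 R + s * max 0 (R - 1)"
          using s mult_left_mono[of R "max 0 R" "1-s"] mult_left_mono[of "R-1" "max 0 (R-1)" s]
          by (simp add: algebra_simps)
        moreover have "0 \<le> (1 - s) * max 0 R + s * max 0 (R - 1)" using s by simp
        ultimately show ?thesis by simp
      qed
    qed (use s C0 aC in auto)
    have "Phi (R + r) (C + \<bar>r\<bar>) = exp ((max 0 (R-s))^2/(3*(C+s)))"
      using False by (simp add: Phi_def s_def)
    also have "\<dots> \<le> exp ((1-s)*((max 0 R)^2/(3*C)) + s*((max 0 (R-1))^2/(3*(C+1))))"
      using q by simp
    also have "\<dots> \<le> (1-s)*P0 + s*Pm" unfolding P0_def Pm_def Phi_def by (rule exp_interp[OF s])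
    also have "\<dots> = P0 + s*(Pm - P0)" by (simp add: algebra_simps)
    also have "\<dots> \<le> P0 + s*(-(P1 - Pm)/2 + 3/(2*(C+1)))"
    proof (intro add_left_mono mult_left_mono)
      define c where "c = 3/(C+1)"
      have c2: "c/2 = 3/(2*(C+1))" by (simp add: c_def)
      have "Pm - P0 \<le> -(P1 - Pm)/2 + c/2" using EP[folded c_def] by (simp add: field_simps)
      then show "Pm - P0 \<le> -(P1 - Pm)/2 + 3/(2*(C+1))" by (simp only: c2)
    qed (use s in auto)
    finally have fin: "Phi (R + r) (C + \<bar>r\<bar>) \<le> P0 + s*(-(P1 - Pm)/2 + 3/(2*(C+1)))" .
    have "P0 + s*(-(P1 - Pm)/2 + 3/(2*(C+1))) = Phi R C + anh_weight R C * r + 3*\<bar>r\<bar>/(2*(C+1))"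
      using False unfolding W P0_def s_def by (simp add: distrib_left mult_ac) (simp add: field_simps)
    then show ?thesis using fin by simp
  qed
qed

lemma ln_half: "0 \<le> (y::real) \<Longrightarrow> y \<le> 1 \<Longrightarrow> y/2 \<le> ln (1 + y)"
proof -
  assume y: "0 \<le> y" "y \<le> 1"
  have "exp (y/2) \<le> 1 + y/2 + (y/2)^2" using y by (intro exp_bound) auto
  also have "\<dots> \<le> 1 + y"
  proof -
    have "y*y \<le> 1*y" using y by (intro mult_right_mono) auto
    then have "(y/2)^2 \<le> y/4" by (simp add: power2_eq_square)
    then show ?thesis using y by linarith
  qed
  finally have "exp (y/2) \<le> 1 + y" .
  then show ?thesis using y ln_le_cancel_iff[of "exp (y/2)" "1+y"] by simp
qed

lemma ln_incr:
  fixes C x :: real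
  assumes "0 \<le> C" "0 \<le> x" "x \<le> 1"
  shows "x/(2*(C+1)) \<le> ln (1 + (C + x)) - ln (1 + C)"
proof -
  have "1 + (C + x) = (1 + C) * (1 + x/(1+C))" using assms by (simp add: field_simps)
  moreover have "0 < 1 + C" "0 < 1 + x/(1+C)" using assms by (auto simp: field_simps)
  ultimately have "ln (1 + (C + x)) - ln (1 + C) = ln (1 + x/(1+C))"
    using ln_mult[of "1+C" "1 + x/(1+C)"] by simp
  moreover have "(x/(1+C))/2 \<le> ln (1 + x/(1+C))"
    using assms by (intro ln_half) (auto simp: field_simps)
  ultimately show ?thesis by (simp add: field_simps)
qed

lemma seg_le: "1 \<le> t \<Longrightarrow> seg_start k t \<le> t"
  unfolding seg_start_def using div_mult_mod_eq[of "t-1" "2^k"] by linarith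

lemma seg_ge1: "1 \<le> seg_start k t"
  by (simp add: seg_start_def)

lemma seg_1: "seg_start k 1 = 1"
  by (simp add: seg_start_def)

lemma seg_Suc: "1 \<le> t \<Longrightarrow> seg_start k (Suc t) = Suc t \<or> seg_start k (Suc t) = seg_start k t"
proof -
  assume t: "1 \<le> t"
  define m :: nat where "m = 2^k"
  have m0: "0 < m" by (simp add: m_def)
  have tt: "t = Suc (t-1)" using t by simp
  have ss: "seg_start k (Suc t) = t div m * m + 1" "seg_start k t = (t-1) div m * m + 1"
    by (simp_all add: seg_start_def m_def)
  show ?thesis
  proof (cases "Suc ((t-1) mod m) = m")
    case True
    have e: "(t-1) div m * m + (t-1) mod m = t - 1" by (rule div_mult_mod_eq)
    have "t = (t-1) div m * m + m" using e True t by linarith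
    then have tq: "t = Suc ((t-1) div m) * m" by simp
    then have "m dvd t" by (metis dvd_triv_right)
    then have "t div m * m = t" by simp
    then show ?thesis using ss by simp
  next
    case False
    have "Suc (t-1) div m = (t-1) div m" using div_Suc[of "t-1" m] mod_Suc[of "t-1" m] False by simp
    then have "t div m = (t-1) div m" using tt by metis
    then show ?thesis using ss by simp
  qed
qed

definition cR :: "(nat \<Rightarrow> nat \<Rightarrow> real) \<Rightarrow> nat \<Rightarrow> nat \<Rightarrow> real" where
  "cR rr k t = (\<Sum>u\<in>{seg_start k t..<t}. rr k u)"
definition cC :: "(nat \<Rightarrow> nat \<Rightarrow> real) \<Rightarrow> nat \<Rightarrow> nat \<Rightarrow> real" where
  "cC rr k t = (\<Sum>u\<in>{seg_start k t..<t}. \<bar>rr k u\<bar>)"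
definition PR :: "(nat \<Rightarrow> nat \<Rightarrow> real) \<Rightarrow> nat \<Rightarrow> nat \<Rightarrow> real" where
  "PR rr k t = (\<Sum>u\<in>{seg_start k t..t}. rr k u)"
definition PC :: "(nat \<Rightarrow> nat \<Rightarrow> real) \<Rightarrow> nat \<Rightarrow> nat \<Rightarrow> real" where
  "PC rr k t = (\<Sum>u\<in>{seg_start k t..t}. \<bar>rr k u\<bar>)"
definition isS :: "nat \<Rightarrow> nat \<Rightarrow> bool" where
  "isS k t \<longleftrightarrow> seg_start k t = t"
definition DoneF :: "(nat \<Rightarrow> nat \<Rightarrow> real) \<Rightarrow> nat \<Rightarrow> nat \<Rightarrow> real" where
  "DoneF rr k t = (\<Sum>e\<in>{e\<in>{1..<t}. isS k (Suc e)}. Phi (PR rr k e) (PC rr k e))"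
definition nS :: "nat \<Rightarrow> nat \<Rightarrow> nat" where
  "nS k t = card {u\<in>{1..t}. isS k u}"
definition LvF :: "real \<Rightarrow> (nat \<Rightarrow> nat \<Rightarrow> real) \<Rightarrow> nat \<Rightarrow> nat \<Rightarrow> real" where
  "LvF K rr k t = DoneF rr k t + Phi (PR rr k t) (PC rr k t) - (real (nS k t) * K - K) - 1
      - 3 * ln (1 + PC rr k t)"

lemma PR_split: "1 \<le> t \<Longrightarrow> PR rr k t = cR rr k t + rr k t"
  unfolding PR_def cR_def using seg_le[of t k]
  by (simp add: atLeastLessThanSuc_atLeastAtMost[symmetric] sum.atLeastLessThan_Suc)

lemma PC_split: "1 \<le> t \<Longrightarrow> PC rr k t = cC rr k t + \<bar>rr k t\<bar>"
  unfolding PC_def cC_def using seg_le[of t k]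
  by (simp add: atLeastLessThanSuc_atLeastAtMost[symmetric] sum.atLeastLessThan_Suc)

lemma cC_nonneg: "0 \<le> cC rr k t" unfolding cC_def by (auto intro: sum_nonneg)
lemma cR_abs: "\<bar>cR rr k t\<bar> \<le> cC rr k t" unfolding cR_def cC_def by (rule sum_abs)
lemma PC_nonneg: "0 \<le> PC rr k t" unfolding PC_def by (auto intro: sum_nonneg)
lemma PR_abs: "\<bar>PR rr k t\<bar> \<le> PC rr k t" unfolding PR_def PC_def by (rule sum_abs)

lemma PC_len:
  assumes "\<And>u. u \<in> {seg_start k t..t} \<Longrightarrow> \<bar>rr k u\<bar> \<le> 1"
  shows "PC rr k t \<le> real (t + 1 - seg_start k t)"
proof -
  have "PC rr k t \<le> real (card {seg_start k t..t}) * 1"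
    unfolding PC_def by (rule sum_bounded_above) (use assms in auto)
  then show ?thesis by simp
qed

lemma start_c: "1 \<le> t \<Longrightarrow> isS k (Suc t) \<Longrightarrow> cR rr k (Suc t) = 0 \<and> cC rr k (Suc t) = 0"
  unfolding isS_def cR_def cC_def by simp

lemma cont_c: "1 \<le> t \<Longrightarrow> \<not> isS k (Suc t) \<Longrightarrow> cR rr k (Suc t) = PR rr k t \<and> cC rr k (Suc t) = PC rr k t"
  using seg_Suc[of t k] unfolding isS_def cR_def cC_def PR_def PC_def
  by (simp add: atLeastLessThanSuc_atLeastAtMost)

lemma Done_Suc: "1 \<le> t \<Longrightarrow> DoneF rr k (Suc t) = DoneF rr k t + (if isS k (Suc t) then Phi (PR rr k t) (PC rr k t) else 0)"
proof -
  assume t: "1 \<le> t"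
  have eq: "{e\<in>{1..<Suc t}. isS k (Suc e)} = {e\<in>{1..<t}. isS k (Suc e)} \<union> (if isS k (Suc t) then {t} else {})"
    using t by (auto simp: less_Suc_eq)
  show ?thesis
  proof (cases "isS k (Suc t)")
    case True
    then show ?thesis unfolding DoneF_def eq by (simp add: sum.union_disjoint)
  next
    case False
    then show ?thesis unfolding DoneF_def eq by simp
  qed
qed

lemma nS_Suc: "nS k (Suc t) = nS k t + (if isS k (Suc t) then 1 else 0)"
proof -
  have eq: "{u\<in>{1..Suc t}. isS k u} = {u\<in>{1..t}. isS k u} \<union> (if isS k (Suc t) then {Suc t} else {})"
    by (auto simp: le_Suc_eq)
  show ?thesis unfolding nS_def eq by (cases "isS k (Suc t)") auto
qed

lemma base_vals: "DoneF rr k 1 = 0" "nS k 1 = 1" "cR rr k 1 = 0" "cC rr k 1 = 0"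
  "PR rr k 1 = rr k 1" "PC rr k 1 = \<bar>rr k 1\<bar>"
proof -
  show "DoneF rr k 1 = 0" by (simp add: DoneF_def)
  have "{u\<in>{1..1}. isS k u} = {1}" by (auto simp: isS_def seg_start_def)
  then show "nS k 1 = 1" by (simp add: nS_def)
  show "cR rr k 1 = 0" "cC rr k 1 = 0" by (simp_all add: cR_def cC_def seg_start_def)
  show "PR rr k 1 = rr k 1" "PC rr k 1 = \<bar>rr k 1\<bar>" by (simp_all add: PR_def PC_def seg_start_def)
qed

lemma Phi00: "Phi 0 0 = 1" by (simp add: Phi_def)

lemma fresh_step:
  fixes r :: real assumes "\<bar>r\<bar> \<le> 1"
  shows "Phi r \<bar>r\<bar> - 1 - 3 * ln (1 + \<bar>r\<bar>) \<le> anh_weight 0 0 * r"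
proof -
  have "Phi (0 + r) (0 + \<bar>r\<bar>) \<le> Phi 0 0 + anh_weight 0 0 * r + 3*\<bar>r\<bar>/(2*(0+1))"
    by (rule step_ineq) (use assms in auto)
  moreover have "\<bar>r\<bar>/2 \<le> ln (1 + \<bar>r\<bar>)" by (rule ln_half) (use assms in auto)
  ultimately show ?thesis by (simp add: Phi00)
qed

lemma level_step:
  assumes t: "1 \<le> t" and r1: "\<bar>rr k (Suc t)\<bar> \<le> 1" and PCT: "PC rr k t \<le> real T"
    and K: "K = 1 + 3 * ln (1 + real T)"
  shows "LvF K rr k (Suc t) - LvF K rr k t \<le> anh_weight (cR rr k (Suc t)) (cC rr k (Suc t)) * rr k (Suc t)"
proof (cases "isS k (Suc t)")
  case True
  note c = start_c[OF t True, of rr]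
  have P: "PR rr k (Suc t) = rr k (Suc t)" "PC rr k (Suc t) = \<bar>rr k (Suc t)\<bar>"
    using PR_split[of "Suc t" rr k] PC_split[of "Suc t" rr k] c by simp_all
  have "ln (1 + PC rr k t) \<le> ln (1 + real T)" using PCT PC_nonneg[of rr k t] by simp
  then have "3 * ln (1 + PC rr k t) \<le> K - 1" using K by simp
  moreover have "Phi (rr k (Suc t)) \<bar>rr k (Suc t)\<bar> - 1 - 3 * ln (1 + \<bar>rr k (Suc t)\<bar>) \<le> anh_weight 0 0 * rr k (Suc t)"
    by (rule fresh_step[OF r1])
  ultimately show ?thesis
    unfolding LvF_def Done_Suc[OF t] nS_Suc using True c P by (simp add: algebra_simps)
next
  case False
  note c = cont_c[OF t False, of rr]
  define R where "R = cR rr k (Suc t)"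
  define C where "C = cC rr k (Suc t)"
  have P: "PR rr k (Suc t) = R + rr k (Suc t)" "PC rr k (Suc t) = C + \<bar>rr k (Suc t)\<bar>"
    using PR_split[of "Suc t" rr k] PC_split[of "Suc t" rr k] by (simp_all add: R_def C_def)
  have C0: "0 \<le> C" by (simp add: C_def cC_nonneg)
  have st: "Phi (R + rr k (Suc t)) (C + \<bar>rr k (Suc t)\<bar>) \<le> Phi R C + anh_weight R C * rr k (Suc t) + 3*\<bar>rr k (Suc t)\<bar>/(2*(C+1))"
    by (rule step_ineq[OF C0 _ r1]) (simp add: R_def C_def cR_abs)
  have li: "\<bar>rr k (Suc t)\<bar>/(2*(C+1)) \<le> ln (1 + (C + \<bar>rr k (Suc t)\<bar>)) - ln (1 + C)"
    by (rule ln_incr) (use C0 r1 in auto)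
  have "3*\<bar>rr k (Suc t)\<bar>/(2*(C+1)) = 3 * (\<bar>rr k (Suc t)\<bar>/(2*(C+1)))" by simp
  then show ?thesis
    unfolding LvF_def Done_Suc[OF t] nS_Suc using False c P st li
    by (simp add: R_def C_def algebra_simps)
qed

lemma Phi_nonneg: "0 \<le> Phi R C" by (simp add: Phi_def)

lemma DoneF_nonneg: "0 \<le> DoneF rr k t"
  unfolding DoneF_def by (auto intro: sum_nonneg simp: Phi_nonneg)

lemma nS_le: "nS k t \<le> t"
proof -
  have "nS k t \<le> card {1..t}" unfolding nS_def by (rule card_mono) auto
  then show ?thesis by simp
qed

lemma meta_bound:
  fixes rr :: "nat \<Rightarrow> nat \<Rightarrow> real" and Ls :: "nat set" and T :: nat
  assumes fin: "finite Ls" and T1: "1 \<le> T"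
    and rb: "\<And>k t. k \<in> Ls \<Longrightarrow> t \<in> {1..T} \<Longrightarrow> \<bar>rr k t\<bar> \<le> 1"
    and ws: "\<And>t. t \<in> {1..T} \<Longrightarrow> (\<Sum>k\<in>Ls. anh_weight (cR rr k t) (cC rr k t) * rr k t) \<le> 0"
    and kL: "k \<in> Ls" and e: "e \<in> {1..T}" and eend: "e = T \<or> isS k (Suc e)"
  shows "Phi (PR rr k e) (PC rr k e) \<le> real (card Ls) * T * (1 + 3 * ln (1 + real T))"
proof -
  define K where "K = 1 + 3 * ln (1 + real T)"
  have PCT: "PC rr k' t \<le> real T" if "k' \<in> Ls" "t \<in> {1..T}" for k' t
  proof -
    have "PC rr k' t \<le> real (t + 1 - seg_start k' t)"
      by (rule PC_len) (use that rb seg_ge1[of k' t] in auto)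
    also have "\<dots> \<le> real T" using that seg_ge1[of k' t] by auto
    finally show ?thesis .
  qed
  have inv: "(\<Sum>k\<in>Ls. LvF K rr k t) \<le> 0" if "1 \<le> t" "t \<le> T" for t
    using that
  proof (induction t rule: nat_induct_at_least)
    case base
    have "(\<Sum>k\<in>Ls. LvF K rr k 1) \<le> (\<Sum>k\<in>Ls. anh_weight (cR rr k 1) (cC rr k 1) * rr k 1)"
    proof (rule sum_mono)
      fix k assume k: "k \<in> Ls"
      have r1: "\<bar>rr k 1\<bar> \<le> 1" using rb[OF k] T1 by auto
      show "LvF K rr k 1 \<le> anh_weight (cR rr k 1) (cC rr k 1) * rr k 1"
        using fresh_step[OF r1] unfolding LvF_def base_vals by simp
    qed
    also have "\<dots> \<le> 0" using ws[of 1] T1 by auto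
    finally show ?case .
  next
    case (Suc t)
    have "(\<Sum>k\<in>Ls. LvF K rr k (Suc t)) = (\<Sum>k\<in>Ls. LvF K rr k t) + (\<Sum>k\<in>Ls. LvF K rr k (Suc t) - LvF K rr k t)"
      by (simp add: sum_subtractf)
    also have "(\<Sum>k\<in>Ls. LvF K rr k (Suc t) - LvF K rr k t) \<le> (\<Sum>k\<in>Ls. anh_weight (cR rr k (Suc t)) (cC rr k (Suc t)) * rr k (Suc t))"
    proof (rule sum_mono)
      fix k assume k: "k \<in> Ls"
      show "LvF K rr k (Suc t) - LvF K rr k t \<le> anh_weight (cR rr k (Suc t)) (cC rr k (Suc t)) * rr k (Suc t)"
        by (rule level_step[OF Suc.hyps(1) _ _ K_def]) (use rb[OF k] PCT[OF k] Suc in auto)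
    qed
    also have "\<dots> \<le> 0" using ws[of "Suc t"] Suc by auto
    finally show ?case using Suc by simp
  qed
  define Q where "Q k' = DoneF rr k' T + Phi (PR rr k' T) (PC rr k' T)" for k'
  have Q0: "0 \<le> Q k'" for k' by (simp add: Q_def DoneF_nonneg Phi_nonneg add_nonneg_nonneg)
  have "Phi (PR rr k e) (PC rr k e) \<le> Q k"
  proof (cases "e = T")
    case True then show ?thesis by (simp add: Q_def DoneF_nonneg)
  next
    case False
    then have "e \<in> {e\<in>{1..<T}. isS k (Suc e)}" using e eend by auto
    then have "Phi (PR rr k e) (PC rr k e) \<le> DoneF rr k T"
      unfolding DoneF_def by (intro member_le_sum) (auto simp: Phi_nonneg)
    then show ?thesis by (simp add: Q_def Phi_nonneg add_increasing2)
  qed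
  also have "\<dots> \<le> (\<Sum>k'\<in>Ls. Q k')" using fin kL Q0 by (intro member_le_sum) auto
  also have "\<dots> \<le> (\<Sum>k'\<in>Ls. LvF K rr k' T + real T * K)"
  proof (rule sum_mono)
    fix k' assume k': "k' \<in> Ls"
    have "ln (1 + PC rr k' T) \<le> ln (1 + real T)" using PCT[OF k'] T1 PC_nonneg[of rr k' T] by simp
    then have a: "1 + 3 * ln (1 + PC rr k' T) \<le> K" by (simp add: K_def)
    have K0: "0 \<le> K" using T1 by (simp add: K_def)
    have "real (nS k' T) * K \<le> real T * K" using nS_le[of k' T] K0 by (intro mult_right_mono) auto
    then show "Q k' \<le> LvF K rr k' T + real T * K" using a unfolding Q_def LvF_def by simp
  qed
  also have "\<dots> = (\<Sum>k'\<in>Ls. LvF K rr k' T) + real (card Ls) * (real T * K)" by (simp add: sum.distrib)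
  also have "\<dots> \<le> real (card Ls) * T * K" using inv[OF T1 order.refl] by simp
  finally show ?thesis by (simp add: K_def)
qed

lemma grad_ineq:
  fixes f :: "'a::euclidean_space \<Rightarrow> real"
  assumes cv: "convex \<Omega>" and cf: "convex_on \<Omega> f"
    and d: "(f has_derivative (\<lambda>h. g \<bullet> h)) (at x within \<Omega>)"
    and x: "x \<in> \<Omega>" and y: "y \<in> \<Omega>"
  shows "f x + g \<bullet> (y - x) \<le> f y"
proof -
  define p where "p s = x + s *\<^sub>R (y - x)" for s :: real
  have pin: "p ` {0..1} \<subseteq> \<Omega>"
  proof
    fix z assume "z \<in> p ` {0..1}"
    then obtain s where s: "0 \<le> s" "s \<le> 1" "z = p s" by auto
    have "(1 - s) *\<^sub>R x + s *\<^sub>R y \<in> \<Omega>" using cv x y s by (intro convexD) auto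
    moreover have "(1 - s) *\<^sub>R x + s *\<^sub>R y = p s" by (simp add: p_def algebra_simps)
    ultimately show "z \<in> \<Omega>" using s by simp
  qed
  have p0: "p 0 = x" by (simp add: p_def)
  have dp: "(p has_derivative (\<lambda>s. s *\<^sub>R (y - x))) (at 0 within {0..1})"
    unfolding p_def by (auto intro!: derivative_eq_intros)
  have df: "(f has_derivative (\<lambda>h. g \<bullet> h)) (at (p 0) within p ` {0..1})"
    using has_derivative_subset[OF d pin] p0 by simp
  have "((f \<circ> p) has_derivative ((\<lambda>h. g \<bullet> h) \<circ> (\<lambda>s. s *\<^sub>R (y - x)))) (at 0 within {0..1})"
    by (rule diff_chain_within[OF dp df])
  moreover have "((\<lambda>h. g \<bullet> h) \<circ> (\<lambda>s. s *\<^sub>R (y - x))) = (*) (g \<bullet> (y - x))"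
    by (auto simp: fun_eq_iff)
  ultimately have "((f \<circ> p) has_field_derivative (g \<bullet> (y - x))) (at 0 within {0..1})"
    unfolding has_field_derivative_def by simp
  then have lim: "((\<lambda>s. ((f \<circ> p) s - (f \<circ> p) 0) / (s - 0)) \<longlongrightarrow> g \<bullet> (y - x)) (at 0 within {0..1})"
    unfolding has_field_derivative_iff .
  have ev: "\<forall>\<^sub>F s in at 0 within {0..1}. ((f \<circ> p) s - (f \<circ> p) 0) / (s - 0) \<le> f y - f x"
    unfolding eventually_at_filter
  proof (intro always_eventually allI impI)
    fix s :: real assume s: "s \<noteq> 0" "s \<in> {0..1}"
    have "f ((1 - s) *\<^sub>R x + s *\<^sub>R y) \<le> (1 - s) * f x + s * f y"
      using s by (intro convex_onD[OF cf]) (auto simp: x y)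
    moreover have "(1 - s) *\<^sub>R x + s *\<^sub>R y = p s" by (simp add: p_def algebra_simps)
    ultimately have "f (p s) - f x \<le> s * (f y - f x)" by (simp add: algebra_simps)
    then show "((f \<circ> p) s - (f \<circ> p) 0) / (s - 0) \<le> f y - f x"
      using s p0 by (simp add: divide_le_eq mult.commute)
  qed
  have nt: "\<not> trivial_limit (at (0::real) within {0..1})"
    using at_within_Icc_at_right[of "0::real" 1] by simp
  have "g \<bullet> (y - x) \<le> f y - f x" by (rule tendsto_upperbound[OF lim ev nt])
  then show ?thesis by simp
qed

lemma ogd:
  fixes \<Omega> :: "'a::euclidean_space set" and xs gs us :: "nat \<Rightarrow> 'a"
  assumes cvx: "convex \<Omega>" and cl: "closed \<Omega>" and ne: "\<Omega> \<noteq> {}"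
    and diam: "\<forall>v\<in>\<Omega>. \<forall>v'\<in>\<Omega>. norm (v - v') \<le> D"
    and eta: "0 < \<eta>" and T1: "1 \<le> T"
    and xin: "\<forall>t\<in>{1..T}. xs t \<in> \<Omega>" and uin: "\<forall>t\<in>{1..T}. us t \<in> \<Omega>"
    and upd: "\<forall>t\<in>{1..<T}. xs (Suc t) = closest_point \<Omega> (xs t - \<eta> *\<^sub>R gs t)"
    and gb: "\<forall>t\<in>{1..T}. norm (gs t) \<le> G"
  shows "(\<Sum>t=1..T. gs t \<bullet> (xs t - us t))
     \<le> (D^2 + 2*D*(\<Sum>t=1..T. norm (us (Suc t) - us t)))/(2*\<eta>) + \<eta>*T*G^2/2"
proof -
  define z where "z t = closest_point \<Omega> (xs t - \<eta> *\<^sub>R gs t)" for t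
  define a where "a t = (norm (xs t - us t))^2" for t
  define b where "b t = (norm (z t - us t))^2" for t
  have per: "2*\<eta>*(gs t \<bullet> (xs t - us t)) \<le> a t - b t + \<eta>^2*G^2" if t: "t \<in> {1..T}" for t
  proof -
    have ut: "us t \<in> \<Omega>" using uin t by auto
    have "dist (z t) (closest_point \<Omega> (us t)) \<le> dist (xs t - \<eta> *\<^sub>R gs t) (us t)"
      unfolding z_def by (rule closest_point_lipschitz[OF cvx cl ne])
    then have "norm (z t - us t) \<le> norm ((xs t - us t) - \<eta> *\<^sub>R gs t)"
      using closest_point_self[OF ut] by (simp add: dist_norm algebra_simps)
    then have "b t \<le> (norm ((xs t - us t) - \<eta> *\<^sub>R gs t))^2"
      unfolding b_def by (intro power_mono) auto
    also have "\<dots> = a t - 2*\<eta>*(gs t \<bullet> (xs t - us t)) + \<eta>^2 * (norm (gs t))^2"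
      unfolding a_def power2_norm_eq_inner
      by (simp add: inner_diff_left inner_diff_right inner_commute algebra_simps power2_eq_square)
    finally have c1: "b t \<le> a t - 2*\<eta>*(gs t \<bullet> (xs t - us t)) + \<eta>^2 * (norm (gs t))^2" .
    have "(norm (gs t))^2 \<le> G^2" using gb t by (intro power_mono) auto
    then have "\<eta>^2 * (norm (gs t))^2 \<le> \<eta>^2 * G^2" by (intro mult_left_mono) auto
    then show ?thesis using c1 by linarith
  qed
  have D0: "0 \<le> D" using diam xin T1 by (metis atLeastAtMost_iff le_refl norm_ge_zero order_trans)
  have shift: "a (Suc t) \<le> b t + 2*D*norm (us (Suc t) - us t)" if t: "t \<in> {1..<T}" for t
  proof -
    have zt: "z t = xs (Suc t)" using upd t by (simp add: z_def)
    define p where "p = xs (Suc t)"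
    define q where "q = us t"
    define q' where "q' = us (Suc t)"
    have pin: "p \<in> \<Omega>" "q \<in> \<Omega>" "q' \<in> \<Omega>" using xin uin t by (auto simp: p_def q_def q'_def)
    have "(norm (p - q'))^2 - (norm (p - q))^2 = (q - q') \<bullet> ((p - q') + (p - q))"
      unfolding power2_norm_eq_inner
      by (simp add: inner_diff_left inner_diff_right inner_add_right inner_commute algebra_simps)
    also have "\<dots> \<le> norm (q - q') * norm ((p - q') + (p - q))" by (rule norm_cauchy_schwarz)
    also have "\<dots> \<le> norm (q - q') * (2*D)"
    proof (intro mult_left_mono)
      have "norm ((p - q') + (p - q)) \<le> norm (p - q') + norm (p - q)" by (rule norm_triangle_ineq)
      also have "\<dots> \<le> 2*D"
      proof -
        have "norm (p - q') \<le> D" "norm (p - q) \<le> D" using diam pin by auto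
        then show ?thesis by linarith
      qed
      finally show "norm ((p - q') + (p - q)) \<le> 2*D" .
    qed simp
    finally have "(norm (p - q'))^2 \<le> (norm (p - q))^2 + 2*D*norm (q' - q)"
      by (simp add: norm_minus_commute algebra_simps)
    then show ?thesis unfolding a_def b_def zt p_def q_def q'_def by simp
  qed
  have ind: "(\<Sum>t=1..n. 2*\<eta>*(gs t \<bullet> (xs t - us t))) \<le> a 1 - b n + 2*D*(\<Sum>t\<in>{1..<n}. norm (us (Suc t) - us t)) + n*(\<eta>^2*G^2)"
    if "1 \<le> n" "n \<le> T" for n
    using that
  proof (induction n rule: nat_induct_at_least)
    case base
    then show ?case using per[of 1] T1 by simp
  next
    case (Suc n)
    have IH: "(\<Sum>t=1..n. 2*\<eta>*(gs t \<bullet> (xs t - us t))) \<le> a 1 - b n + 2*D*(\<Sum>t\<in>{1..<n}. norm (us (Suc t) - us t)) + n*(\<eta>^2*G^2)"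
      using Suc by simp
    have p: "2*\<eta>*(gs (Suc n) \<bullet> (xs (Suc n) - us (Suc n))) \<le> a (Suc n) - b (Suc n) + \<eta>^2*G^2"
      using per[of "Suc n"] Suc by simp
    have sh: "a (Suc n) \<le> b n + 2*D*norm (us (Suc n) - us n)" using shift[of n] Suc by simp
    have s1: "(\<Sum>t=1..Suc n. 2*\<eta>*(gs t \<bullet> (xs t - us t))) = (\<Sum>t=1..n. 2*\<eta>*(gs t \<bullet> (xs t - us t))) + 2*\<eta>*(gs (Suc n) \<bullet> (xs (Suc n) - us (Suc n)))"
      using Suc by simp
    have s2: "(\<Sum>t\<in>{1..<Suc n}. norm (us (Suc t) - us t)) = (\<Sum>t\<in>{1..<n}. norm (us (Suc t) - us t)) + norm (us (Suc n) - us n)"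
      using Suc by (simp add: sum.atLeastLessThan_Suc)
    show ?case unfolding s1 s2 using IH p sh by (simp add: algebra_simps)
  qed
  have b0: "0 \<le> b T" by (simp add: b_def)
  have a1: "a 1 \<le> D^2"
  proof -
    have "norm (xs 1 - us 1) \<le> D" using diam xin uin T1 by auto
    then show ?thesis unfolding a_def by (intro power_mono) auto
  qed
  have P1: "(\<Sum>t\<in>{1..<T}. norm (us (Suc t) - us t)) \<le> (\<Sum>t=1..T. norm (us (Suc t) - us t))"
    by (intro sum_mono2) auto
  have "2*\<eta>*(\<Sum>t=1..T. gs t \<bullet> (xs t - us t)) = (\<Sum>t=1..T. 2*\<eta>*(gs t \<bullet> (xs t - us t)))"
    by (simp add: sum_distrib_left)
  also have "\<dots> \<le> a 1 - b T + 2*D*(\<Sum>t\<in>{1..<T}. norm (us (Suc t) - us t)) + T*(\<eta>^2*G^2)"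
    using ind[OF T1 order.refl] .
  also have "\<dots> \<le> D^2 + 2*D*(\<Sum>t=1..T. norm (us (Suc t) - us t)) + T*(\<eta>^2*G^2)"
    using a1 b0 P1 D0 mult_left_mono[OF P1, of "2*D"] by simp
  finally have "2*\<eta>*(\<Sum>t=1..T. gs t \<bullet> (xs t - us t)) \<le> D^2 + 2*D*(\<Sum>t=1..T. norm (us (Suc t) - us t)) + T*(\<eta>^2*G^2)" .
  then show ?thesis using eta by (simp add: field_simps power2_eq_square)
qed

lemma R_from_Phi:
  fixes R C B L :: real
  assumes P: "Phi R C \<le> B" and RC: "\<bar>R\<bar> \<le> C" and CL: "C \<le> L"
  shows "R \<le> sqrt (3 * L * ln B)"
proof -
  have C0: "0 \<le> C" using RC by linarith
  have B1: "1 \<le> B" using Phi_ge1[OF C0, of R] P by linarith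
  have lnB: "0 \<le> ln B" using B1 by simp
  have L0: "0 \<le> L" using C0 CL by linarith
  show ?thesis
  proof (cases "R \<le> 0")
    case True
    have "0 \<le> sqrt (3 * L * ln B)" using lnB L0 by simp
    then show ?thesis using True by linarith
  next
    case False
    then have Cp: "0 < C" using RC by linarith
    have "exp (R^2/(3*C)) \<le> B" using P False by (simp add: Phi_def)
    then have "ln (exp (R^2/(3*C))) \<le> ln B" using B1 ln_le_cancel_iff[of "exp (R^2/(3*C))" B] by simp
    then have "R^2/(3*C) \<le> ln B" by simp
    then have "R^2 \<le> 3*C*ln B" using Cp by (simp add: divide_le_eq mult.commute)
    also have "\<dots> \<le> 3*L*ln B" using CL lnB by (intro mult_right_mono) auto
    finally show ?thesis by (rule real_le_rsqrt)
  qed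
qed

lemma sqrt_add_le:
  fixes a b :: real
  assumes "0 \<le> a" "0 \<le> b"
  shows "sqrt a + sqrt b \<le> sqrt (2*(a+b))"
proof (rule real_le_rsqrt)
  have "(sqrt a + sqrt b)^2 = a + b + 2 * (sqrt a * sqrt b)"
    using assms by (simp add: power2_eq_square algebra_simps)
  also have "2 * (sqrt a * sqrt b) \<le> a + b"
    using sum_squares_bound[of "sqrt a" "sqrt b"] assms by (simp add: power2_eq_square)
  finally show "(sqrt a + sqrt b)^2 \<le> 2*(a+b)" by simp
qed

lemma levels_eq:
  assumes "2^kk \<le> T" "T < 2^(kk+1)"
  shows "levels T = {..kk}"
proof -
  have "k \<in> levels T \<longleftrightarrow> k \<le> kk" for k
  proof
    assume "k \<in> levels T"
    then have "2^k \<le> T" by (simp add: levels_def)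
    show "k \<le> kk"
    proof (rule ccontr)
      assume "\<not> k \<le> kk"
      then have "kk+1 \<le> k" by simp
      then have "(2::nat)^(kk+1) \<le> 2^k" by (rule power_increasing) simp
      then show False using \<open>2^k \<le> T\<close> assms by linarith
    qed
  next
    assume "k \<le> kk"
    then have "(2::nat)^k \<le> 2^kk" by (simp add: power_increasing)
    then have "2^k \<le> T" using assms by linarith
    then show "k \<in> levels T" by (simp add: levels_def)
  qed
  then show ?thesis by auto
qed

lemma lnB_le:
  assumes T1: "1 \<le> T" and kk: "2^kk \<le> T" "T < 2^(kk+1)"
  shows "ln (real (card (levels T)) * real T * (1 + 3 * ln (1 + real T))) \<le> cT T"
proof -
  define L where "L = ln (1 + real T)"
  have L0: "0 \<le> L" by (simp add: L_def)
  have card: "card (levels T) = kk + 1" using levels_eq[OF kk] by simp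
  have kkl: "real kk \<le> log 2 (real T)"
  proof -
    have "(2::real) powr (real kk) = real (2^kk)" by (simp add: powr_realpow)
    also have "\<dots> \<le> real T" using kk by linarith
    finally show ?thesis using T1 by (subst le_log_iff) auto
  qed
  have pos: "0 < real (kk+1)" "0 < real T" "0 < 1 + 3*L" using T1 L0 by auto
  have "ln (real (card (levels T)) * real T * (1 + 3 * L)) = ln (real (kk+1)) + ln (real T) + ln (1 + 3*L)"
    using pos by (simp add: card ln_mult)
  also have "ln (real (kk+1)) \<le> ln (1 + log 2 (real T))" using kkl by simp
  also have "ln (1 + 3*L) \<le> 1 + ln ((5 + 3*L)/2)"
  proof -
    have e2: "2 \<le> exp (1::real)" using exp_ge_add_one_self[of 1] by simp
    have "1 + 3*L \<le> exp 1 * ((5 + 3*L)/2)"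
    proof -
      have "1 + 3*L \<le> 2 * ((5 + 3*L)/2)" using L0 by simp
      also have "\<dots> \<le> exp 1 * ((5 + 3*L)/2)" using e2 L0 by (intro mult_right_mono) auto
      finally show ?thesis .
    qed
    then have "ln (1 + 3*L) \<le> ln (exp 1 * ((5 + 3*L)/2))" using pos L0 by simp
    also have "\<dots> = 1 + ln ((5 + 3*L)/2)" using L0 ln_mult[of "exp 1" "(5+3*L)/2"] by simp
    finally show ?thesis .
  qed
  finally show ?thesis by (simp add: cT_def L_def algebra_simps)
qed

lemma final_alg:
  fixes D G P m T :: real
  assumes D: "0 < D" and G: "0 < G" and P0: "0 \<le> P" and PD: "P \<le> D"
    and m1: "1 \<le> m" and mT: "m \<le> T" and Tm: "T \<le> 2*m"
  shows "(D^2 + 2*D*P)/(2*(D/(G* sqrt m))) + (D/(G* sqrt m))*T*G^2/2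
         \<le> ((1 + sqrt 2)/2 * D * G + G * sqrt (D * P)) * sqrt T"
proof -
  define sm where "sm = sqrt m"
  have sm: "0 < sm" using m1 by (simp add: sm_def)
  have eq: "(D^2 + 2*D*P)/(2*(D/(G* sqrt m))) + (D/(G* sqrt m))*T*G^2/2
      = D*G* sm/2 + P*G* sm + D*G*(T/sm)/2"
    using sm D G unfolding sm_def[symmetric] by (simp add: field_simps power2_eq_square)
  have a: "sm \<le> sqrt T" using mT by (simp add: sm_def)
  have b: "T/sm \<le> sqrt 2 * sqrt T"
  proof -
    have "(T/sm)^2 = T^2/m" using m1 by (simp add: sm_def power_divide)
    also have "\<dots> \<le> 2*T"
    proof -
      have "T*T \<le> (2*m)*T" using Tm m1 mT by (intro mult_right_mono) auto
      then show ?thesis using m1 by (simp add: divide_le_eq power2_eq_square algebra_simps)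
    qed
    finally have "T/sm \<le> sqrt (2*T)" by (rule real_le_rsqrt)
    then show ?thesis by (simp add: real_sqrt_mult)
  qed
  have c: "P \<le> sqrt (D*P)"
  proof (rule real_le_rsqrt)
    show "P^2 \<le> D*P" using PD P0 by (simp add: power2_eq_square mult_right_mono)
  qed
  have t1: "D*G* sm/2 \<le> D*G* sqrt T/2" using a D G by simp
  have t2: "P*G* sm \<le> sqrt (D*P)*G* sqrt T"
  proof -
    have "P* sm \<le> sqrt (D*P)* sqrt T" using a c P0 sm D by (intro mult_mono) auto
    then show ?thesis using G by (simp add: mult_ac mult_right_mono)
  qed
  have "D*G*(T/sm) \<le> D*G*(sqrt 2 * sqrt T)" using b D G by (intro mult_left_mono) auto
  then have t3: "D*G*(T/sm)/2 \<le> D*G*(sqrt 2 * sqrt T)/2" by simp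
  have "((1 + sqrt 2)/2 * D * G + G * sqrt (D * P)) * sqrt T
        = D*G* sqrt T/2 + sqrt (D*P)*G* sqrt T + D*G*(sqrt 2 * sqrt T)/2"
    by (simp add: algebra_simps add_divide_distrib)
  then show ?thesis using eq t1 t2 t3 by linarith
qed

theorem lemma6:
  fixes \<Omega> :: "'a::euclidean_space set"
    and f :: "nat \<Rightarrow> 'a \<Rightarrow> real"
    and g :: "nat \<Rightarrow> 'a \<Rightarrow> 'a"
    and G D :: real
    and T :: nat
    and x :: "nat \<Rightarrow> nat \<Rightarrow> 'a"
    and w :: "nat \<Rightarrow> 'a"
    and u :: "nat \<Rightarrow> 'a"
  assumes T_pos: "T \<ge> 1"
    and convex_dom: "convex \<Omega>" and closed_dom: "closed \<Omega>"
    and zero_in: "0 \<in> \<Omega>"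
    and diam: "\<forall>v\<in>\<Omega>. \<forall>v'\<in>\<Omega>. norm (v - v') \<le> D"
    and convex_f: "\<forall>t\<in>{1..T}. convex_on \<Omega> (f t)"
    and grad: "\<forall>t\<in>{1..T}. \<forall>v\<in>\<Omega>. (f t has_derivative (\<lambda>h. g t v \<bullet> h)) (at v within \<Omega>)"
    and grad_bound: "\<forall>t\<in>{1..T}. \<forall>v\<in>\<Omega>. norm (g t v) \<le> G"
    and f_range: "\<forall>t\<in>{1..T}. \<forall>v\<in>\<Omega>. 0 \<le> f t v \<and> f t v \<le> 1"
    and expert_init: "\<forall>k\<in>levels T. x k 1 \<in> \<Omega>"
    and expert_step: "\<forall>k\<in>levels T. \<forall>t\<in>{1..<T}.
        x k (Suc t) = closest_point \<Omega> (x k t - (D / (G * sqrt (2 ^ k))) *\<^sub>R g t (x k t))"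
    and play: "\<forall>t\<in>{1..T}. w t = (\<Sum>k\<in>levels T. meta_prob T f w x k t *\<^sub>R x k t)"
    and comparator: "\<forall>t\<in>{1..T+1}. u t \<in> \<Omega>"
    and path_len: "(\<Sum>t=1..T. norm (u (Suc t) - u t)) \<le> D"
  shows "(\<Sum>t=1..T. f t (w t)) - (\<Sum>t=1..T. f t (u t))
         \<le> ((1 + sqrt 2) / 2 * D * G + G * sqrt (D * (\<Sum>t=1..T. norm (u (Suc t) - u t)))
             + sqrt (6 * cT T)) * sqrt (real T)"
proof -
  have ne: "\<Omega> \<noteq> {}" using zero_in by auto
  have D0: "0 \<le> D" using diam zero_in by force
  have "norm (g 1 0) \<le> G" using grad_bound T_pos zero_in by auto
  then have G0: "0 \<le> G" using norm_ge_zero[of "g 1 0"] by linarith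
  obtain kk where kk: "2^kk \<le> T" "T < 2^(kk+1)" using ex_power_ivl1[of 2 T] T_pos by auto
  have lev: "levels T = {..kk}" by (rule levels_eq[OF kk])
  have finL: "finite (levels T)" by (simp add: lev)
  have kkL: "kk \<in> levels T" by (simp add: lev)
  have xin: "x k t \<in> \<Omega>" if k: "k \<in> levels T" and t: "1 \<le> t" "t \<le> T" for k t
    using t
  proof (induction t rule: nat_induct_at_least)
    case base then show ?case using expert_init k by auto
  next
    case (Suc t)
    then have "x k (Suc t) = closest_point \<Omega> (x k t - (D / (G * sqrt (2 ^ k))) *\<^sub>R g t (x k t))"
      using expert_step k by auto
    then show ?case using closest_point_in_set[OF closed_dom ne] by simp
  qed
  define rr where "rr k t = f t (w t) - f t (x k t)" for k t
  have cumR_eq: "cumR f w x k t = cR rr k t" for k t by (simp add: cumR_def cR_def rr_def)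
  have cumC_eq: "cumC f w x k t = cC rr k t" for k t by (simp add: cumC_def cC_def rr_def)
  have wprop: "w t \<in> \<Omega> \<and> (\<Sum>k\<in>levels T. anh_weight (cR rr k t) (cC rr k t) * rr k t) \<le> 0"
    if t: "t \<in> {1..T}" for t
  proof -
    define wk where "wk k = anh_weight (cR rr k t) (cC rr k t)" for k
    define W where "W = (\<Sum>k\<in>levels T. wk k)"
    have wk0: "0 \<le> wk k" for k by (simp add: wk_def anh_weight_nonneg cC_nonneg)
    have wt: "w t = (\<Sum>k\<in>levels T. (wk k / W) *\<^sub>R x k t)"
      using play t by (simp add: meta_prob_def cumR_eq cumC_eq wk_def W_def)
    have xt: "\<And>k. k \<in> levels T \<Longrightarrow> x k t \<in> \<Omega>" using xin t by auto
    show ?thesis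
    proof (cases "W = 0")
      case True
      then have z: "\<And>k. k \<in> levels T \<Longrightarrow> wk k = 0"
        using sum_nonneg_eq_0_iff[OF finL, of wk] wk0 by (simp add: W_def)
      have "w t = 0" using wt True by simp
      then show ?thesis using zero_in z by (simp add: wk_def[symmetric])
    next
      case False
      have "0 \<le> W" unfolding W_def by (rule sum_nonneg) (rule wk0)
      then have Wp: "0 < W" using False by simp
      have s1: "(\<Sum>k\<in>levels T. wk k / W) = 1" using Wp by (simp add: sum_divide_distrib[symmetric] W_def)
      have p0: "\<And>k. 0 \<le> wk k / W" using wk0 Wp by simp
      have win: "w t \<in> \<Omega>" unfolding wt
        by (rule convex_sum[OF finL convex_dom s1]) (use p0 xt in auto)
      have ct: "convex_on \<Omega> (f t)" using convex_f t by auto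
      have jen: "f t (w t) \<le> (\<Sum>k\<in>levels T. (wk k / W) * f t (x k t))"
        unfolding wt by (rule convex_on_sum[OF finL _ ct s1]) (use p0 xt kkL in auto)
      have "(\<Sum>k\<in>levels T. wk k * rr k t) = W * f t (w t) - (\<Sum>k\<in>levels T. wk k * f t (x k t))"
        by (simp add: rr_def right_diff_distrib sum_subtractf W_def sum_distrib_right)
      also have "(\<Sum>k\<in>levels T. wk k * f t (x k t)) = W * (\<Sum>k\<in>levels T. (wk k / W) * f t (x k t))"
        using Wp by (simp add: sum_distrib_left)
      also have "W * f t (w t) - W * (\<Sum>k\<in>levels T. (wk k / W) * f t (x k t)) \<le> 0"
      proof -
        have "W * (f t (w t) - (\<Sum>k\<in>levels T. (wk k / W) * f t (x k t))) \<le> 0"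
          using jen Wp by (intro mult_nonneg_nonpos) auto
        then show ?thesis by (simp only: right_diff_distrib)
      qed
      finally show ?thesis using win by (simp add: wk_def)
    qed
  qed
  have rb: "\<bar>rr k t\<bar> \<le> 1" if "k \<in> levels T" "t \<in> {1..T}" for k t
  proof -
    have "w t \<in> \<Omega>" "x k t \<in> \<Omega>" using wprop xin that by auto
    then have "0 \<le> f t (w t)" "f t (w t) \<le> 1" "0 \<le> f t (x k t)" "f t (x k t) \<le> 1"
      using f_range that by auto
    then show ?thesis by (simp add: rr_def abs_le_iff)
  qed
  define B where "B = real (card (levels T)) * real T * (1 + 3 * ln (1 + real T))"
  have phiB: "Phi (PR rr kk e) (PC rr kk e) \<le> B" if "e \<in> {1..T}" "e = T \<or> isS kk (Suc e)" for e
    unfolding B_def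
    by (rule meta_bound[OF finL T_pos rb _ kkL that]) (use wprop in auto)
  have lnB: "ln B \<le> cT T" unfolding B_def by (rule lnB_le[OF T_pos kk])
  define m :: nat where "m = 2^kk"
  have m1: "1 \<le> m" by (simp add: m_def)
  have mT: "m \<le> T" using kk by (simp add: m_def)
  have Tm: "T < 2*m" using kk by (simp add: m_def)
  have seg1: "seg_start kk t = 1" if "1 \<le> t" "t \<le> m" for t
  proof -
    have "(t-1) div m = 0" using that by simp
    then show ?thesis by (simp add: seg_start_def m_def[symmetric])
  qed
  have seg2: "seg_start kk t = m + 1" if "m + 1 \<le> t" "t \<le> T" for t
  proof -
    have "(t-1) div m = 1" using that Tm m1 by (intro div_nat_eqI) auto
    then show ?thesis by (simp add: seg_start_def m_def[symmetric])
  qed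
  have isSm: "isS kk (Suc m)"
  proof -
    have "m div m = 1" using m1 by simp
    then show ?thesis by (simp add: isS_def seg_start_def m_def[symmetric])
  qed
  have lnB0: "0 \<le> ln B"
  proof -
    have "1 \<le> Phi (PR rr kk m) (PC rr kk m)" by (rule Phi_ge1[OF PC_nonneg])
    then show ?thesis using phiB[of m] m1 mT isSm by simp
  qed
  have part1: "(\<Sum>t=1..m. rr kk t) \<le> sqrt (3 * real m * ln B)"
  proof -
    have "PR rr kk m = (\<Sum>t=1..m. rr kk t)" using seg1[of m] m1 by (simp add: PR_def)
    moreover have "PC rr kk m \<le> real (m + 1 - seg_start kk m)"
      by (rule PC_len) (use rb kkL seg1[of m] m1 mT in auto)
    moreover have "Phi (PR rr kk m) (PC rr kk m) \<le> B" using phiB[of m] m1 mT isSm by simp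
    ultimately show ?thesis using R_from_Phi[OF _ PR_abs, of rr kk m B] seg1[of m] m1 by simp
  qed
  have part2: "(\<Sum>t=m+1..T. rr kk t) \<le> sqrt (3 * real (T - m) * ln B)"
  proof (cases "m < T")
    case True
    have e: "PR rr kk T = (\<Sum>t=m+1..T. rr kk t)" using seg2[of T] True by (simp add: PR_def)
    have "PC rr kk T \<le> real (T + 1 - seg_start kk T)"
      by (rule PC_len) (use rb kkL seg2[of T] True m1 in auto)
    then have pc: "PC rr kk T \<le> real (T - m)" using seg2[of T] True by simp
    have ph: "Phi (PR rr kk T) (PC rr kk T) \<le> B" using phiB[of T] T_pos by simp
    have "PR rr kk T \<le> sqrt (3 * real (T - m) * ln B)" by (rule R_from_Phi[OF ph PR_abs pc])
    then show ?thesis using e by simp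
  next
    case False
    then have "T = m" using mT by simp
    then show ?thesis by simp
  qed
  have meta: "(\<Sum>t=1..T. rr kk t) \<le> sqrt (6 * cT T) * sqrt (real T)"
  proof -
    have split: "{1..T} = {1..m} \<union> {m+1..T}" using m1 mT by auto
    have "(\<Sum>t=1..T. rr kk t) = (\<Sum>t=1..m. rr kk t) + (\<Sum>t=m+1..T. rr kk t)"
      unfolding split by (rule sum.union_disjoint) auto
    also have "\<dots> \<le> sqrt (3 * real m * ln B) + sqrt (3 * real (T - m) * ln B)"
      using part1 part2 by linarith
    also have "\<dots> \<le> sqrt (2 * (3 * real m * ln B + 3 * real (T - m) * ln B))"
      using lnB0 by (intro sqrt_add_le) auto
    also have "3 * real m * ln B + 3 * real (T - m) * ln B = 3 * real T * ln B"
      using mT by (simp add: of_nat_diff algebra_simps)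
    also have "sqrt (2 * (3 * real T * ln B)) \<le> sqrt (6 * cT T * real T)"
    proof -
      have "real T * ln B \<le> real T * cT T" using lnB by (intro mult_left_mono) auto
      then show ?thesis by (simp add: mult_ac)
    qed
    also have "\<dots> = sqrt (6 * cT T) * sqrt (real T)" by (simp add: real_sqrt_mult)
    finally show ?thesis .
  qed
  define P where "P = (\<Sum>t=1..T. norm (u (Suc t) - u t))"
  have P0: "0 \<le> P" by (simp add: P_def sum_nonneg)
  have expl: "f t (x kk t) - f t (u t) \<le> g t (x kk t) \<bullet> (x kk t - u t)" if t: "t \<in> {1..T}" for t
  proof -
    have xi: "x kk t \<in> \<Omega>" using xin kkL t by auto
    have ui: "u t \<in> \<Omega>" using comparator t by auto
    have "f t (x kk t) + g t (x kk t) \<bullet> (u t - x kk t) \<le> f t (u t)"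
      by (rule grad_ineq[OF convex_dom _ _ xi ui]) (use convex_f grad t xi in auto)
    then show ?thesis by (simp add: inner_diff_right)
  qed
  have expert: "(\<Sum>t=1..T. g t (x kk t) \<bullet> (x kk t - u t)) \<le> ((1 + sqrt 2)/2 * D * G + G * sqrt (D * P)) * sqrt (real T)"
  proof (cases "G = 0 \<or> D = 0")
    case True
    have "(\<Sum>t=1..T. g t (x kk t) \<bullet> (x kk t - u t)) = 0"
    proof (rule sum.neutral, rule ballI)
      fix t assume t: "t \<in> {1..T}"
      show "g t (x kk t) \<bullet> (x kk t - u t) = 0"
      proof (cases "G = 0")
        case True
        have "x kk t \<in> \<Omega>" using xin kkL t by auto
        then have "norm (g t (x kk t)) \<le> 0" using grad_bound t True by auto
        then show ?thesis by simp
      next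
        case False
        then have "D = 0" using \<open>G = 0 \<or> D = 0\<close> by simp
        moreover have "x kk t \<in> \<Omega>" "u t \<in> \<Omega>" using xin kkL comparator t by auto
        ultimately have "norm (x kk t - u t) \<le> 0" using diam by auto
        then show ?thesis by simp
      qed
    qed
    moreover have "0 \<le> ((1 + sqrt 2)/2 * D * G + G * sqrt (D * P)) * sqrt (real T)"
      using D0 G0 P0 by simp
    ultimately show ?thesis by simp
  next
    case False
    then have Gp: "0 < G" and Dp: "0 < D" using G0 D0 by auto
    have eta: "0 < D / (G * sqrt (real m))" using Gp Dp m1 by simp
    have "(\<Sum>t=1..T. g t (x kk t) \<bullet> (x kk t - u t))
        \<le> (D^2 + 2*D*P)/(2*(D / (G * sqrt (real m)))) + (D / (G * sqrt (real m)))*T*G^2/2"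
      unfolding P_def
    proof (rule ogd[OF convex_dom closed_dom ne diam eta T_pos])
      show "\<forall>t\<in>{1..T}. x kk t \<in> \<Omega>" using xin kkL by auto
      show "\<forall>t\<in>{1..T}. u t \<in> \<Omega>" using comparator by auto
      show "\<forall>t\<in>{1..<T}. x kk (Suc t) = closest_point \<Omega> (x kk t - (D / (G * sqrt (real m))) *\<^sub>R g t (x kk t))"
        using expert_step kkL by (simp add: m_def)
      show "\<forall>t\<in>{1..T}. norm (g t (x kk t)) \<le> G" using grad_bound xin kkL by auto
    qed
    also have "\<dots> \<le> ((1 + sqrt 2)/2 * D * G + G * sqrt (D * P)) * sqrt (real T)"
      by (rule final_alg[OF Dp Gp P0]) (use path_len m1 mT Tm in \<open>auto simp: P_def\<close>)
    finally show ?thesis .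
  qed
  have "(\<Sum>t=1..T. f t (w t)) - (\<Sum>t=1..T. f t (u t))
        = (\<Sum>t=1..T. rr kk t) + (\<Sum>t=1..T. f t (x kk t) - f t (u t))"
    by (simp add: rr_def sum_subtractf)
  also have "(\<Sum>t=1..T. f t (x kk t) - f t (u t)) \<le> (\<Sum>t=1..T. g t (x kk t) \<bullet> (x kk t - u t))"
    by (rule sum_mono) (rule expl)
  finally show ?thesis using meta expert unfolding P_def by (simp add: algebra_simps)
qed

end
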